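(* Assume (H1), $\lim_{x\to\infty}q(x)=\infty$, and $$\lim_{z\to\infty}\frac{q'(z)}{q(z)}\sqrt{M(z)}=0.$$ Then (i) $\lim_{z\to\infty}q(z)\sqrt{M(z)}=\infty$; (ii) (H2) holds; (iii) $\lim_{z\to\infty}\mathfrak m'(z)/\sqrt{\mathfrak m(z)}=0$.
   Context: Let $q\in C^1([0,\infty))$ and $\gamma(y)=2\int_0^yq$. (H1): $\int_0^\infty e^{\gamma(y)}\int_y^\infty e^{-\gamma(\xi)}d\xi\,dy<\infty$. (H2): $\lim_{x\to\infty}q(x)=\infty$ and $\lim_{x\to\infty}q'(x)/q(x)^2=0$. $M(z)=\int_z^\infty dy/q(y)$ (assumed finite for large $z$ as part of the hypothesis). $\mathfrak m(z)=2\int_z^\infty e^{\gamma(y)}\int_y^\infty e^{-\gamma(\xi)}d\xi\,dy$. *)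

theory Defs
  imports "HOL-Analysis.Analysis"
begin

definition gam :: "(real \<Rightarrow> real) \<Rightarrow> real \<Rightarrow> real" where
  "gam q y = 2 * integral {0..y} q"

definition inner_int :: "(real \<Rightarrow> real) \<Rightarrow> real \<Rightarrow> ennreal" where
  "inner_int q y = (\<integral>\<^sup>+ \<xi>\<in>{y..}. ennreal (exp (- gam q \<xi>)) \<partial>lborel)"

definition dbl_int :: "(real \<Rightarrow> real) \<Rightarrow> real \<Rightarrow> ennreal" where
  "dbl_int q z = (\<integral>\<^sup>+ y\<in>{z..}. ennreal (exp (gam q y)) * inner_int q y \<partial>lborel)"

definition H1 :: "(real \<Rightarrow> real) \<Rightarrow> bool" where
  "H1 q \<longleftrightarrow> dbl_int q 0 < \<infinity>"

definition frak_m :: "(real \<Rightarrow> real) \<Rightarrow> real \<Rightarrow> real" where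
  "frak_m q z = 2 * enn2real (dbl_int q z)"

definition M_fun :: "(real \<Rightarrow> real) \<Rightarrow> real \<Rightarrow> real" where
  "M_fun q z = (LBINT y:{z..}. 1 / q y)"

end

theory Submission
  imports Defs
begin

lemma tailI:
  fixes f :: "real \<Rightarrow> real"
  assumes cont: "continuous_on {a..} f" and nn: "\<And>x. x \<ge> a \<Longrightarrow> f x \<ge> 0"
    and bnd: "\<And>T. T \<ge> a \<Longrightarrow> integral {a..T} f \<le> B"
  shows "\<exists>L. (f has_integral L) {a..} \<and> L \<le> B \<and> (\<forall>T\<ge>a. integral {a..T} f \<le> L)
          \<and> (\<integral>\<^sup>+x. ennreal (f x) * indicator {a..} x \<partial>lborel) = ennreal L"
proof -
  have int: "f integrable_on {a..y}" for y
    by (rule integrable_continuous_interval) (rule continuous_on_subset[OF cont], auto)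
  have mono: "integral {a..T} f \<le> integral {a..T'} f" if "T \<le> T'" for T T'
    using that by (intro integral_subset_le int) (auto intro: nn)
  define L where "L = (SUP T\<in>{a..}. integral {a..T} f)"
  have bdd: "bdd_above ((\<lambda>T. integral {a..T} f) ` {a..})" using bnd by (auto intro!: bdd_aboveI2)
  have le: "integral {a..T} f \<le> L" if "T \<ge> a" for T
    unfolding L_def using bdd that by (intro cSUP_upper) auto
  have LB: "L \<le> B" unfolding L_def by (rule cSUP_least) (auto intro: bnd)
  have lim: "((\<lambda>y. integral {a..y} f) \<longlongrightarrow> L) at_top"
  proof (rule order_tendstoI)
    fix l assume "l < L"
    then obtain T where T: "T \<ge> a" "l < integral {a..T} f"
      unfolding L_def using bdd by (subst (asm) less_cSUP_iff) auto
    show "eventually (\<lambda>y. l < integral {a..y} f) at_top"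
      using eventually_ge_at_top[of T] by eventually_elim (use T mono in force)
  next
    fix u assume "L < u"
    show "eventually (\<lambda>y. integral {a..y} f < u) at_top"
      using eventually_ge_at_top[of a] by eventually_elim (use le \<open>L<u\<close> in force)
  qed
  have hi: "(f has_integral L) {a..}" by (rule has_integral_to_inf[OF int lim nn])
  have nnv: "(\<integral>\<^sup>+x. ennreal (f x) * indicator {a..} x \<partial>lborel) = ennreal L"
    using nn_integral_has_integral_lebesgue'[OF _ hi] nn by auto
  show ?thesis using hi LB le nnv by blast
qed

lemma tail_split:
  fixes f :: "real \<Rightarrow> real"
  assumes cont: "continuous_on {a..} f" and nn: "\<And>x. x \<ge> a \<Longrightarrow> f x \<ge> 0"
    and hA: "(f has_integral A) {a..}" and az: "a \<le> z"
  shows "(f has_integral (A - integral {a..z} f)) {z..}"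
proof -
  have int: "f integrable_on {c..y}" if "a \<le> c" for c y
    by (rule integrable_continuous_interval) (rule continuous_on_subset[OF cont], use that in auto)
  have "integral {z..T} f \<le> A" if "T \<ge> z" for T
  proof -
    have "integral {z..T} f \<le> integral {a..T} f"
      using az by (intro integral_subset_le int) (auto intro: nn)
    also have "\<dots> \<le> integral {a..} f"
      using hA by (intro integral_subset_le int) (auto intro: nn)
    finally show ?thesis using hA by (simp add: integral_unique)
  qed
  then obtain L where L: "(f has_integral L) {z..}"
    using tailI[of z f A] cont nn az by (meson atLeast_subset_iff continuous_on_subset order_trans)
  have "(f has_integral (integral {a..z} f + L)) ({a..z} \<union> {z..})"
    by (rule has_integral_Un[OF integrable_integral[OF int[OF order_refl]] L])
       (rule negligible_subset[of "{z}"], auto)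
  moreover have "{a..z} \<union> {z..} = {a..}" using az by auto
  ultimately have "A = integral {a..z} f + L" using hA has_integral_unique by metis
  then show ?thesis using L by simp
qed

lemma tail_deriv:
  fixes f :: "real \<Rightarrow> real"
  assumes cont: "continuous_on {a..} f" and nn: "\<And>x. x \<ge> a \<Longrightarrow> f x \<ge> 0"
    and hA: "(f has_integral A) {a..}" and az: "a < z"
  shows "((\<lambda>y. integral {y..} f) has_real_derivative - f z) (at z)"
proof -
  have eq: "integral {y..} f = A - integral {a..y} f" if "y \<in> {a<..}" for y
    using tail_split[OF cont nn hA, of y] that by (simp add: integral_unique)
  have "((\<lambda>y. integral {a..y} f) has_real_derivative f z) (at z within {a..z+1})"
    by (rule integral_has_real_derivative) (rule continuous_on_subset[OF cont], use az in auto)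
  then have "((\<lambda>y. integral {a..y} f) has_real_derivative f z) (at z)"
    using az by (simp add: at_within_Icc_at)
  then have "((\<lambda>y. A - integral {a..y} f) has_real_derivative - f z) (at z)"
    by (auto intro!: derivative_eq_intros)
  then show ?thesis
    by (rule has_field_derivative_transform_within_open[where S="{a<..}"]) (use az eq in auto)
qed


theorem lemma6p1:
  fixes q q' :: "real \<Rightarrow> real"
  assumes deriv_q: "\<And>x. x \<ge> 0 \<Longrightarrow> (q has_real_derivative q' x) (at x within {0..})"
    and cont_q': "continuous_on {0..} q'"
    and H1: "H1 q"
    and q_inf: "filterlim q at_top at_top"
    and M_finite: "eventually (\<lambda>z. set_integrable lborel {z..} (\<lambda>y. 1 / q y)) at_top"
    and cond: "((\<lambda>z. q' z / q z * sqrt (M_fun q z)) \<longlongrightarrow> 0) at_top"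
  shows "filterlim (\<lambda>z. q z * sqrt (M_fun q z)) at_top at_top
       \<and> (filterlim q at_top at_top \<and> ((\<lambda>x. q' x / (q x)\<^sup>2) \<longlongrightarrow> 0) at_top)
       \<and> ((\<lambda>z. deriv (frak_m q) z / sqrt (frak_m q z)) \<longlongrightarrow> 0) at_top"
proof -
  have qc: "continuous_on {0..} q"
    by (rule DERIV_continuous_on[OF deriv_q]) auto
  have dq: "(q has_real_derivative q' x) (at x)" if "x > 0" for x
  proof -
    have "(q has_real_derivative q' x) (at x within {0<..})"
      by (rule DERIV_subset[OF deriv_q]) (use that in auto)
    moreover have "at x within {0<..} = at x" by (rule at_within_open) (use that in auto)
    ultimately show ?thesis by metis
  qed
  define M where "M = M_fun q"
  have ev1: "eventually (\<lambda>x. 1 \<le> q x) at_top"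
    using q_inf by (simp add: filterlim_at_top)
  obtain N where N: "\<And>x. x \<ge> N \<Longrightarrow> 1 \<le> q x \<and> set_integrable lborel {x..} (\<lambda>y. 1 / q y)"
    using eventually_conj[OF ev1 M_finite] by (auto simp: eventually_at_top_linorder)
  define z0 where "z0 = max N 1"
  have z0pos: "z0 > 0" unfolding z0_def by auto
  have q1: "1 \<le> q x" if "x \<ge> z0" for x using N[of x] that unfolding z0_def by auto
  have qpos: "0 < q x" if "x \<ge> z0" for x using q1[OF that] by auto
  have hM: "((\<lambda>y. 1 / q y) has_integral M z) {z..}" if "z \<ge> z0" for z
  proof -
    have "set_integrable lborel {z..} (\<lambda>y. 1 / q y)" using N[of z] that unfolding z0_def by auto
    from set_borel_integral_eq_integral[OF this] show ?thesis
      unfolding M_def M_fun_def by (simp add: integrable_integral)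
  qed
  have qc0: "continuous_on {z0..} q" by (rule continuous_on_subset[OF qc]) (use z0pos in auto)
  have iqc: "continuous_on {z0..} (\<lambda>y. 1 / q y)"
    by (intro continuous_on_divide continuous_on_const qc0) (use qpos in force)
  have iqnn: "0 \<le> 1 / q y" if "y \<ge> z0" for y using qpos[OF that] by simp
  have qnn: "0 \<le> q y" if "y \<ge> z0" for y using qpos[OF that] by simp
  have Mint: "integral {z..} (\<lambda>y. 1 / q y) = M z" if "z \<ge> z0" for z
    using hM[OF that] by (rule integral_unique)
  have Meq: "M z = M z0 - integral {z0..z} (\<lambda>y. 1 / q y)" if "z \<ge> z0" for z
  proof -
    have "integral {z..} (\<lambda>y. 1 / q y) = M z0 - integral {z0..z} (\<lambda>y. 1 / q y)"
      using tail_split[OF iqc iqnn hM[OF order_refl] that] by (rule integral_unique)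
    then show ?thesis using Mint[OF that] by simp
  qed
  have dM: "(M has_real_derivative - (1 / q z)) (at z)" if "z > z0" for z
  proof -
    have "((\<lambda>y. integral {y..} (\<lambda>y. 1 / q y)) has_real_derivative - (1 / q z)) (at z)"
      by (rule tail_deriv[OF iqc iqnn hM[OF order_refl] that])
    then show ?thesis
      by (rule has_field_derivative_transform_within_open[where S="{z0<..}"])
         (use that Mint in auto)
  qed
  have Mle: "M z \<le> M z0" if "z \<ge> z0" for z
  proof -
    have "0 \<le> integral {z0..z} (\<lambda>y. 1 / q y)"
    proof (rule integral_nonneg)
      show "(\<lambda>y. 1 / q y) integrable_on {z0..z}"
        by (rule integrable_continuous_interval, rule continuous_on_subset[OF iqc]) auto
    next
      fix x assume "x \<in> {z0..z}" then show "0 \<le> 1 / q x" by (intro iqnn) auto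
    qed
    then show ?thesis using Meq[OF that] by simp
  qed
  have Mpos: "M z > 0" if "z \<ge> z0" for z
  proof -
    have ic: "continuous_on {z..z+1} q" by (rule continuous_on_subset[OF qc0]) (use that in auto)
    obtain x where x: "x \<in> {z..z+1}" "\<And>y. y \<in> {z..z+1} \<Longrightarrow> q y \<le> q x"
      using continuous_attains_sup[OF compact_Icc _ ic] by auto
    have xq: "q x > 0" using x that by (intro qpos) auto
    have ic2: "continuous_on {z..z+1} (\<lambda>y. 1 / q y)" by (rule continuous_on_subset[OF iqc]) (use that in auto)
    have "integral {z..z+1} (\<lambda>y. 1 / q x) \<le> integral {z..z+1} (\<lambda>y. 1 / q y)"
    proof (rule integral_le)
      show "(\<lambda>y. 1 / q y) integrable_on {z..z+1}" by (rule integrable_continuous_interval[OF ic2])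
      fix y assume y: "y \<in> {z..z+1}"
      then have "q y > 0" using that by (intro qpos) auto
      then show "1 / q x \<le> 1 / q y" using x(2)[OF y] by (simp add: frac_le)
    qed auto
    also have "\<dots> \<le> integral {z..} (\<lambda>y. 1 / q y)"
      by (intro integral_subset_le integrable_continuous_interval[OF ic2])
         (use hM[OF that] that in \<open>auto intro: iqnn qnn\<close>)
    also have "\<dots> = M z" using hM[OF that] by (simp add: integral_unique)
    finally have "1 / q x \<le> M z" by simp
    moreover have "0 < 1 / q x" using xq by simp
    ultimately show ?thesis by linarith
  qed
  define F where "F z = q z * sqrt (M z)" for z
  define DF where "DF z = q' z * sqrt (M z) - 1 / (2 * sqrt (M z))" for z
  define eps where "eps z = q' z / q z * sqrt (M z)" for z
  have dF: "(F has_real_derivative DF z) (at z)" if "z > z0" for z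
  proof -
    have Mz: "M z > 0" using Mpos that by auto
    have qz: "q z > 0" using qpos that by auto
    have "(F has_real_derivative (q' z * sqrt (M z) + q z * (inverse (sqrt (M z)) / 2 * - (1 / q z)))) (at z)"
      unfolding F_def using dq[of z] dM[OF that] Mz z0pos that
      by (auto intro!: derivative_eq_intros DERIV_real_sqrt)
    moreover have "q' z * sqrt (M z) + q z * (inverse (sqrt (M z)) / 2 * - (1 / q z)) = DF z"
      unfolding DF_def using qz by (simp add: field_simps)
    ultimately show ?thesis by simp
  qed
  have Fpos: "F z > 0" if "z \<ge> z0" for z unfolding F_def using qpos[OF that] Mpos[OF that] by simp
  have partI: "filterlim F at_top at_top"
  proof (subst filterlim_at_top, intro allI)
    fix K :: real
    define K' where "K' = max K 1"
    have K'pos: "K' > 0" by (simp add: K'_def)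
    define c where "c = 1 / (4 * sqrt (M z0))"
    have cpos: "c > 0" using Mpos[of z0] by (simp add: c_def)
    have "eventually (\<lambda>z. dist (eps z) 0 < 1/(8*K')) at_top"
      using cond K'pos unfolding tendsto_iff eps_def M_def by auto
    then obtain N1 where N1: "\<And>z. z \<ge> N1 \<Longrightarrow> dist (eps z) 0 < 1/(8*K')"
      by (auto simp: eventually_at_top_linorder)
    define Z1 where "Z1 = max N1 (z0+1)"
    have key: "DF x \<le> - c" if "x \<ge> Z1" "F x \<le> 2*K'" for x
    proof -
      have xz: "x > z0" "x \<ge> N1" using that unfolding Z1_def by auto
      define s where "s = sqrt (M x)"
      have s: "s > 0" "s \<le> sqrt (M z0)" using Mpos[of x] Mle[of x] xz by (auto simp: s_def)
      have qx: "q x > 0" using qpos xz by auto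
      have e: "\<bar>eps x\<bar> < 1/(8*K')" using N1[of x] xz by (simp add: dist_real_def)
      have qs: "q x * s \<le> 2*K'" using that(2) by (simp add: F_def s_def)
      have qs2: "q x \<le> 2*K'/s" using qs s by (simp add: field_simps)
      have "q' x * s = eps x * q x" using qx by (simp add: eps_def s_def)
      also have "\<dots> \<le> \<bar>eps x\<bar> * q x" using qx by (intro mult_right_mono) auto
      also have "\<dots> \<le> 1/(8*K') * q x" using e qx by (intro mult_right_mono) auto
      also have "\<dots> \<le> 1/(8*K') * (2*K'/s)" using qs2 K'pos by (intro mult_left_mono) auto
      also have "\<dots> = 1/(4 * s)" using K'pos s by (simp add: field_simps)
      finally have A: "q' x * s \<le> 1/(4 * s)" .
      have B: "1/(2 * s) = 2 * (1/(4 * s))" by simp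
      have C: "c \<le> 1/(4 * s)" unfolding c_def by (rule frac_le) (use s in auto)
      have "DF x = q' x * s - 1/(2 * s)" by (simp add: DF_def s_def)
      then show ?thesis using A B C by linarith
    qed
    have neg: "DF x < 0" if "x \<ge> Z1" "F x \<le> 2*K'" for x using key[OF that] cpos by linarith
    have Fgt: "K' < F z" if zZ1: "z \<ge> Z1" for z
    proof (rule ccontr)
      assume "\<not> K' < F z" then have Fz: "F z \<le> K'" by simp
      have zz0: "z > z0" using zZ1 by (simp add: Z1_def)
      have dF': "(F has_real_derivative DF x) (at x)" if "x \<ge> z" for x using dF[of x] that zz0 by simp
      have Fcont: "continuous_on {z..t} F" for t
        by (rule DERIV_continuous_on[where D=DF]) (auto intro: has_field_derivative_at_within dF')
      have stay: "F t \<le> K'" if "t \<ge> z" for t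
      proof (rule ccontr)
        assume "\<not> F t \<le> K'" then have Ft: "F t > K'" by simp
        define A where "A = {z..t} \<inter> F -` {..K'}"
        have cA: "closed A" unfolding A_def by (rule continuous_closed_preimage[OF Fcont]) auto
        have zA: "z \<in> A" using that Fz by (auto simp: A_def)
        have bA: "bdd_above A" unfolding A_def by (rule bdd_aboveI[of _ t]) auto
        define s where "s = Sup A"
        have sA: "s \<in> A" unfolding s_def using closed_contains_Sup[OF _ bA cA] zA by auto
        have s: "z \<le> s" "s \<le> t" "F s \<le> K'" using sA by (auto simp: A_def)
        have st: "s < t" using s Ft by (cases "s = t") auto
        have after: "K' < F u" if "s < u" "u \<le> t" for u
        proof (rule ccontr)
          assume "\<not> K' < F u"
          then have "u \<in> A" using that s by (auto simp: A_def)
          then have "u \<le> s" unfolding s_def by (rule cSup_upper[OF _ bA])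
          then show False using that by simp
        qed
        have "isCont F s" using dF'[of s] s by (auto intro: DERIV_isCont)
        then obtain d where d: "d > 0" "\<And>u. dist u s < d \<Longrightarrow> dist (F u) (F s) < K'"
          using K'pos unfolding continuous_at_eps_delta by blast
        define t' where "t' = min t (s + d/2)"
        have t': "s < t'" "t' \<le> t" "t' < s + d" using st d by (auto simp: t'_def)
        obtain \<xi> where \<xi>: "s < \<xi>" "\<xi> < t'" "F t' - F s = (t' - s) * DF \<xi>"
          using MVT2[OF t'(1), of F DF] dF' s by force
        have "K' < F \<xi>" using after \<xi> t' by auto
        moreover have "F \<xi> < 2*K'" using d(2)[of \<xi>] \<xi> t' s by (auto simp: dist_real_def)
        ultimately have "DF \<xi> < 0" using neg[of \<xi>] \<xi> s zZ1 by auto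
        then have "(t' - s) * DF \<xi> < 0" using t' by (simp add: mult_pos_neg)
        then have "F t' < F s" using \<xi>(3) by linarith
        moreover have "K' < F t'" using after t' by auto
        ultimately show False using s by linarith
      qed
      define t where "t = z + (K' + 1) / c"
      have zt: "z < t" using cpos K'pos by (simp add: t_def)
      obtain \<xi> where \<xi>: "z < \<xi>" "\<xi> < t" "F t - F z = (t - z) * DF \<xi>"
        using MVT2[OF zt, of F DF] dF' by force
      have "DF \<xi> \<le> -c" using key[of \<xi>] stay[of \<xi>] \<xi> zZ1 K'pos by auto
      then have "(t - z) * DF \<xi> \<le> (t - z) * (-c)" using zt by (intro mult_left_mono) auto
      also have "(t - z) * (-c) = -(K'+1)" using cpos by (simp add: t_def)
      finally have "F t \<le> F z - (K'+1)" using \<xi>(3) by linarith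
      then have "F t < 0" using Fz by linarith
      moreover have "F t > 0" using Fpos[of t] zt zz0 by auto
      ultimately show False by linarith
    qed
    show "eventually (\<lambda>z. K \<le> F z) at_top"
      using eventually_ge_at_top[of Z1] by eventually_elim (use Fgt in \<open>force simp: K'_def\<close>)
  qed
  have part2: "((\<lambda>x. q' x / (q x)\<^sup>2) \<longlongrightarrow> 0) at_top"
  proof -
    have "((\<lambda>x. eps x * inverse (F x)) \<longlongrightarrow> 0 * 0) at_top"
      by (intro tendsto_mult tendsto_inverse_0_at_top partI) (use cond in \<open>simp add: eps_def M_def\<close>)
    moreover have "eventually (\<lambda>x. eps x * inverse (F x) = q' x / (q x)\<^sup>2) at_top"
      using eventually_ge_at_top[of z0]
    proof eventually_elim
      case (elim x)
      then have "q x > 0" "sqrt (M x) > 0" using qpos Mpos by auto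
      then show ?case by (simp add: eps_def F_def field_simps power2_eq_square)
    qed
    ultimately show ?thesis using Lim_transform_eventually by force
  qed
  have part3: "((\<lambda>z. deriv (frak_m q) z / sqrt (frak_m q z)) \<longlongrightarrow> 0) at_top"
  proof -
    have gamf: "gam q = (\<lambda>y. 2 * integral {0..y} q)" by (simp add: fun_eq_iff gam_def)
    have dgam: "(gam q has_real_derivative 2 * q y) (at y)" if "y > 0" for y
    proof -
      have "((\<lambda>x. integral {0..x} q) has_real_derivative q y) (at y within {0..y+1})"
        by (rule integral_has_real_derivative) (rule continuous_on_subset[OF qc], use that in auto)
      then have "((\<lambda>x. integral {0..x} q) has_real_derivative q y) (at y)"
        using that by (simp add: at_within_Icc_at)
      then have "((\<lambda>x. 2 * integral {0..x} q) has_real_derivative 2 * q y) (at y)"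
        by (rule DERIV_cmult)
      then show ?thesis unfolding gamf .
    qed
    define E where "E y = exp (- gam q y)" for y
    have Epos: "E y > 0" for y by (simp add: E_def)
    have dE: "(E has_real_derivative - 2 * q y * E y) (at y)" if "y > 0" for y
    proof -
      have "((\<lambda>y. exp (- gam q y)) has_real_derivative exp (- gam q y) * (- (2 * q y))) (at y)"
        by (rule DERIV_fun_exp, rule DERIV_minus, rule dgam[OF that])
      then show ?thesis unfolding E_def by (simp add: algebra_simps)
    qed
    obtain Z0 where Z0: "\<And>x. x \<ge> Z0 \<Longrightarrow> \<bar>q' x / (q x)\<^sup>2\<bar> \<le> 1"
    proof -
      have "eventually (\<lambda>x. dist (q' x / (q x)\<^sup>2) 0 < 1) at_top"
        using part2 by (auto simp: tendsto_iff)
      then obtain N where "\<And>x. x \<ge> N \<Longrightarrow> dist (q' x / (q x)\<^sup>2) 0 < 1"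
        by (auto simp: eventually_at_top_linorder)
      then show ?thesis using that by (force simp: dist_real_def)
    qed
    define Z where "Z = max Z0 (z0 + 1)"
    have Zz0: "Z > z0" "Z \<ge> Z0" by (auto simp: Z_def)
    define R where "R y = E y / q y" for y
    define G where "G y = E y * (2 + q' y / (q y)\<^sup>2)" for y
    have dR: "((\<lambda>y. - R y) has_real_derivative G y) (at y)" if "y \<ge> Z" for y
    proof -
      have y0: "y > 0" "q y > 0" using that Zz0 z0pos qpos[of y] by auto
      have "((\<lambda>y. - (E y / q y)) has_real_derivative
              - ((- 2 * q y * E y * q y - E y * q' y) / (q y * q y))) (at y)"
        by (intro DERIV_minus DERIV_divide dE dq) (use y0 in auto)
      moreover have "- ((- 2 * q y * E y * q y - E y * q' y) / (q y * q y)) = G y"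
        using y0 by (simp add: G_def field_simps power2_eq_square)
      ultimately show ?thesis by (simp add: R_def)
    qed
    have GE: "E y \<le> G y \<and> G y \<le> 3 * E y" if "y \<ge> Z" for y
    proof -
      have "\<bar>q' y / (q y)\<^sup>2\<bar> \<le> 1" using Z0 Zz0 that by auto
      then have "1 \<le> 2 + q' y / (q y)\<^sup>2" "2 + q' y / (q y)\<^sup>2 \<le> 3"
        using abs_le_iff[of "q' y / (q y)\<^sup>2" 1] by linarith+
      then show ?thesis using Epos[of y] unfolding G_def
        by (auto simp: mult_le_cancel_left1 mult_left_le)
    qed
    have Econt: "continuous_on {Z..} E"
    proof (rule DERIV_continuous_on)
      fix x assume "x \<in> {Z..}"
      then have "x > 0" using Zz0 z0pos by auto
      show "(E has_field_derivative (- 2 * q x * E x)) (at x within {Z..})"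
        by (rule has_field_derivative_at_within[OF dE[OF \<open>x > 0\<close>]])
    qed
    have Enn: "0 \<le> E y" for y using Epos[of y] by simp
    have Eint: "E integrable_on {y..T}" if "y \<ge> Z" for y T
      by (rule integrable_continuous_interval, rule continuous_on_subset[OF Econt]) (use that in auto)
    have FTC: "(G has_integral (R y - R T)) {y..T}" if "Z \<le> y" "y \<le> T" for y T
    proof -
      have "(G has_integral ((- R T) - (- R y))) {y..T}"
      proof (rule fundamental_theorem_of_calculus[OF that(2)])
        fix x assume "x \<in> {y..T}"
        then have "x \<ge> Z" using that by auto
        then show "((\<lambda>y. - R y) has_vector_derivative G x) (at x within {y..T})"
          using dR[of x] by (auto simp: has_real_derivative_iff_has_vector_derivative[symmetric]
              intro: has_field_derivative_at_within)
      qed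
      then show ?thesis by simp
    qed
    have Rnn: "0 \<le> R y" if "y \<ge> z0" for y using Epos[of y] qpos[OF that] by (simp add: R_def)
    have Eup: "integral {y..T} E \<le> R y" if "Z \<le> y" "y \<le> T" for y T
    proof -
      have "integral {y..T} E \<le> R y - R T"
        by (rule has_integral_le[OF integrable_integral[OF Eint[OF that(1)]] FTC[OF that]])
           (use GE that in auto)
      then show ?thesis using Rnn[of T] that Zz0 by auto
    qed
    have Elow: "R y - R T \<le> 3 * integral {y..T} E" if "Z \<le> y" "y \<le> T" for y T
    proof -
      have "R y - R T \<le> integral {y..T} (\<lambda>x. 3 * E x)"
        by (rule has_integral_le[OF FTC[OF that] integrable_integral])
           (use GE that Eint[OF that(1)] in auto)
      then show ?thesis by simp
    qed
    define Jf where "Jf y = integral {y..} E" for y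
    have hJ: "(E has_integral Jf y) {y..} \<and> Jf y \<le> R y \<and> (\<forall>T\<ge>y. integral {y..T} E \<le> Jf y)
          \<and> inner_int q y = ennreal (Jf y)" if "y \<ge> Z" for y
    proof -
      have c: "continuous_on {y..} E" by (rule continuous_on_subset[OF Econt]) (use that in auto)
      have bnd: "\<And>T. y \<le> T \<Longrightarrow> integral {y..T} E \<le> R y" using Eup that by blast
      have ex: "\<exists>L. (E has_integral L) {y..} \<and> L \<le> R y \<and> (\<forall>T\<ge>y. integral {y..T} E \<le> L)
          \<and> (\<integral>\<^sup>+x. ennreal (E x) * indicator {y..} x \<partial>lborel) = ennreal L"
        by (rule tailI[OF c _ bnd]) (rule Enn)
      then obtain L where L: "(E has_integral L) {y..}" "L \<le> R y" "\<forall>T\<ge>y. integral {y..T} E \<le> L"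
          "(\<integral>\<^sup>+x. ennreal (E x) * indicator {y..} x \<partial>lborel) = ennreal L"
        by blast
      have "Jf y = L" using L(1) by (simp add: Jf_def integral_unique)
      moreover have "inner_int q y = (\<integral>\<^sup>+x. ennreal (E x) * indicator {y..} x \<partial>lborel)"
        by (simp add: inner_int_def E_def)
      ultimately show ?thesis using L by simp
    qed
    have gam_lb: "gam q T \<ge> gam q z0 + 2 * (T - z0)" if "T \<ge> z0" for T
    proof -
      have qint: "q integrable_on {0..T}"
        by (rule integrable_continuous_interval, rule continuous_on_subset[OF qc]) auto
      have "integral {0..z0} q + integral {z0..T} q = integral {0..T} q"
        using Henstock_Kurzweil_Integration.integral_combine[where a=0 and c=z0 and b=T and f=q] that z0pos qint by auto
      moreover have "integral {z0..T} (\<lambda>_. 1::real) \<le> integral {z0..T} q"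
        by (rule integral_le) (use q1 integrable_on_subinterval[OF qint, of z0 T] z0pos in auto)
      ultimately show ?thesis using that by (simp add: gam_def)
    qed
    have gam_top: "filterlim (gam q) at_top at_top"
    proof (subst filterlim_at_top, intro allI)
      fix K
      show "eventually (\<lambda>T. K \<le> gam q T) at_top"
        using eventually_ge_at_top[of "z0 + \<bar>K - gam q z0\<bar>"]
        by eventually_elim (use gam_lb in \<open>smt (verit)\<close>)
    qed
    have E0: "(E \<longlongrightarrow> 0) at_top"
    proof -
      have "filterlim (\<lambda>T. - gam q T) at_bot at_top"
        using gam_top by (simp add: filterlim_uminus_at_top)
      moreover have "E = (\<lambda>x. exp (- gam q x))" by (simp add: fun_eq_iff E_def)
      ultimately show ?thesis using filterlim_compose[OF exp_at_bot] by metis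
    qed
    have R0: "(R \<longlongrightarrow> 0) at_top"
    proof (rule Lim_null_comparison[OF _ E0])
      show "eventually (\<lambda>T. norm (R T) \<le> E T) at_top"
        using eventually_ge_at_top[of z0]
      proof eventually_elim
        case (elim T)
        have "E T / q T \<le> E T / 1"
          by (rule divide_left_mono) (use q1[OF elim] Epos[of T] in auto)
        then show ?case using Rnn[OF elim] by (simp add: R_def)
      qed
    qed
    have Jlow: "R y / 3 \<le> Jf y" if "y \<ge> Z" for y
    proof -
      have lim: "((\<lambda>T. (R y - R T) / 3) \<longlongrightarrow> (R y - 0) / 3) at_top"
        by (intro tendsto_intros R0) auto
      have ev: "eventually (\<lambda>T. (R y - R T) / 3 \<le> Jf y) at_top"
        using eventually_ge_at_top[of y]
      proof eventually_elim
        case (elim T)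
        then show ?case using Elow[OF that elim] hJ[OF that] by auto
      qed
      from tendsto_le[OF trivial_limit_at_top_linorder tendsto_const lim ev] show ?thesis by simp
    qed
    define h where "h y = exp (gam q y) * Jf y" for y
    have eR: "exp (gam q y) * R y = 1 / q y" for y
      by (simp add: R_def E_def exp_minus field_simps)
    have hb: "1 / 3 * (1 / q y) \<le> h y \<and> h y \<le> 1 / q y" if "y \<ge> Z" for y
    proof -
      have "exp (gam q y) * (R y / 3) \<le> exp (gam q y) * Jf y"
        using Jlow[OF that] by (intro mult_left_mono) auto
      moreover have "exp (gam q y) * Jf y \<le> exp (gam q y) * R y"
        using hJ[OF that] by (intro mult_left_mono) auto
      ultimately show ?thesis using eR[of y] by (simp add: h_def)
    qed
    have Jnn: "0 \<le> Jf y" if "y \<ge> Z" for y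
      by (rule has_integral_nonneg[OF conjunct1[OF hJ[OF that]]]) (rule Enn)
    have hnn: "0 \<le> h y" if "y \<ge> Z" for y using Jnn[OF that] by (simp add: h_def)
    define Z' where "Z' = Z + 1"
    have dJ: "(Jf has_real_derivative - E y) (at y)" if "y > Z" for y
      unfolding Jf_def[abs_def]
      by (rule tail_deriv[OF Econt _ conjunct1[OF hJ[OF order_refl]] that]) (rule Enn)
    have dh: "(h has_real_derivative (exp (gam q y) * (2 * q y) * Jf y + - E y * exp (gam q y))) (at y)"
      if "y > Z" for y
      unfolding h_def[abs_def] using Zz0 z0pos that
      by (intro DERIV_mult DERIV_fun_exp dgam dJ) auto
    have hcont: "continuous_on {Z'..} h"
    proof (rule DERIV_continuous_on)
      fix x assume "x \<in> {Z'..}"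
      then have "x > Z" by (auto simp: Z'_def)
      show "(h has_field_derivative (exp (gam q x) * (2 * q x) * Jf x + - E x * exp (gam q x))) (at x within {Z'..})"
        by (rule has_field_derivative_at_within[OF dh[OF \<open>x > Z\<close>]])
    qed
    have hint: "\<exists>L. (h has_integral L) {z..} \<and>
        (\<integral>\<^sup>+x. ennreal (h x) * indicator {z..} x \<partial>lborel) = ennreal L" if zZ': "z \<ge> Z'" for z
    proof -
      have zZ: "z \<ge> Z" "z \<ge> z0" using that Zz0 by (auto simp: Z'_def)
      have bnd: "integral {z..T} h \<le> M z" if "T \<ge> z" for T
      proof -
        have "integral {z..T} h \<le> integral {z..T} (\<lambda>y. 1 / q y)"
        proof (rule integral_le)
          show "h integrable_on {z..T}"
            by (rule integrable_continuous_interval, rule continuous_on_subset[OF hcont]) (use zZ' in auto)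
          show "(\<lambda>y. 1 / q y) integrable_on {z..T}"
            by (rule integrable_continuous_interval, rule continuous_on_subset[OF iqc]) (use zZ in auto)
          fix x assume "x \<in> {z..T}" then have "x \<ge> Z" using zZ by auto
          then show "h x \<le> 1 / q x" using hb by blast
        qed
        also have "\<dots> \<le> integral {z..} (\<lambda>y. 1 / q y)"
          by (rule integral_subset_le)
             (use hM[OF zZ(2)] zZ in \<open>auto intro!: integrable_continuous_interval
                continuous_on_subset[OF iqc] intro: iqnn qnn\<close>)
        finally show ?thesis using Mint[OF zZ(2)] by simp
      qed
      show ?thesis
        using tailI[of z h "M z"] continuous_on_subset[OF hcont, of "{z..}"] hnn bnd that zZ
        by (auto simp: Z'_def)
    qed
    define Lf where "Lf z = integral {z..} h" for z
    have hL: "(h has_integral Lf z) {z..}" if "z \<ge> Z'" for z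
      using hint[OF that] by (auto simp: Lf_def integral_unique)
    have fm: "frak_m q z = 2 * Lf z" if zZ': "z \<ge> Z'" for z
    proof -
      have zZ: "z \<ge> Z" using zZ' by (simp add: Z'_def)
      obtain L where L: "(h has_integral L) {z..}"
          "(\<integral>\<^sup>+x. ennreal (h x) * indicator {z..} x \<partial>lborel) = ennreal L"
        using hint[OF zZ'] by blast
      have LL: "L = Lf z" using L(1) by (simp add: Lf_def integral_unique)
      have "dbl_int q z = (\<integral>\<^sup>+x. ennreal (h x) * indicator {z..} x \<partial>lborel)"
        unfolding dbl_int_def
      proof (rule nn_integral_cong)
        fix y :: real
        show "ennreal (exp (gam q y)) * inner_int q y * indicator {z..} y
              = ennreal (h y) * indicator {z..} y"
        proof (cases "y \<ge> z")
          case True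
          then have "y \<ge> Z" using zZ by auto
          then show ?thesis using hJ[of y] Jnn[of y] True
            by (simp add: h_def ennreal_mult)
        qed simp
      qed
      moreover have "0 \<le> L" by (rule has_integral_nonneg[OF L(1)], rule hnn) (use zZ in auto)
      ultimately show ?thesis using L(2) LL by (simp add: frak_m_def)
    qed
    have dfm: "(frak_m q has_real_derivative - 2 * h z) (at z)" if "z > Z'" for z
    proof -
      have "((\<lambda>y. integral {y..} h) has_real_derivative - h z) (at z)"
        by (rule tail_deriv[OF hcont _ hL[OF order_refl] that]) (use Zz0 in \<open>auto simp: Z'_def intro: hnn\<close>)
      then have "((\<lambda>y. 2 * Lf y) has_real_derivative 2 * (- h z)) (at z)"
        unfolding Lf_def by (rule DERIV_cmult)
      then have "((\<lambda>y. 2 * Lf y) has_real_derivative - 2 * h z) (at z)" by simp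
      then show ?thesis
        by (rule has_field_derivative_transform_within_open[where S="{Z'<..}"])
           (use that fm in auto)
    qed
    have Llow: "M z / 3 \<le> Lf z" if "z \<ge> Z'" for z
    proof -
      have zZ: "z \<ge> Z" "z \<ge> z0" using that Zz0 by (auto simp: Z'_def)
      have "((\<lambda>y. 1 / 3 * (1 / q y)) has_integral (1 / 3 * M z)) {z..}"
        by (rule has_integral_mult_right[OF hM[OF zZ(2)]])
      from has_integral_le[OF this hL[OF that]] show ?thesis using hb zZ by auto
    qed
    have bound: "norm (deriv (frak_m q) z / sqrt (frak_m q z)) \<le> 4 * inverse (F z)" if "z > Z'" for z
    proof -
      have zZ: "z \<ge> Z" "z \<ge> z0" "z \<ge> Z'" using that Zz0 by (auto simp: Z'_def)
      have m: "M z > 0" using Mpos zZ by auto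
      have qz: "q z > 0" using qpos zZ by auto
      have a: "0 \<le> h z" "h z \<le> 1 / q z" using hb[OF zZ(1)] hnn[OF zZ(1)] by auto
      have L: "M z / 3 \<le> Lf z" by (rule Llow[OF zZ(3)])
      have dv: "deriv (frak_m q) z = - 2 * h z" by (rule DERIV_imp_deriv[OF dfm[OF that]])
      have s4: "sqrt (M z / 4) = sqrt (M z) / 2" by (simp add: real_sqrt_divide)
      have "sqrt (M z / 4) \<le> sqrt (2 * Lf z)" using L m by (intro real_sqrt_le_mono) auto
      then have sl: "sqrt (M z) / 2 \<le> sqrt (2 * Lf z)" using s4 by simp
      have "norm (deriv (frak_m q) z / sqrt (frak_m q z)) = 2 * h z / sqrt (2 * Lf z)"
        using a L m by (simp add: dv fm[OF zZ(3)])
      also have "\<dots> \<le> (2 / q z) / (sqrt (M z) / 2)"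
        by (rule frac_le) (use a qz m sl in auto)
      also have "\<dots> = 4 * inverse (F z)" using qz m by (simp add: F_def field_simps)
      finally show ?thesis .
    qed
    show ?thesis
    proof (rule Lim_null_comparison)
      show "eventually (\<lambda>z. norm (deriv (frak_m q) z / sqrt (frak_m q z)) \<le> 4 * inverse (F z)) at_top"
        using eventually_gt_at_top[of Z'] by eventually_elim (rule bound)
      show "((\<lambda>z. 4 * inverse (F z)) \<longlongrightarrow> 0) at_top"
        using tendsto_mult_left_zero[OF tendsto_inverse_0_at_top[OF partI], of 4]
        by (simp add: mult.commute)
    qed
  qed
  show ?thesis using partI part2 part3 q_inf unfolding F_def M_def by auto
qed

end
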